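(* $\mathfrak{Z}(\mathcal{S})\leq(2^{\aleph_0})^+$; that is, every separable LMP $\mathbb{S}$ satisfies $\mathfrak{Z}(\mathbb{S})\leq(2^{\aleph_0})^+$.
   Context: An LMP is a triple $\mathbb{S}=(S,\Sigma,\{\tau_a\mid a\in L\})$ with $(S,\Sigma)$ a measurable space, $L$ a countable label set, and each $\tau_a:S\times\Sigma\to[0,1]$ a Markov kernel (subprobability measure in the second argument, measurable in the first). It is separable if $\Sigma$ is countably generated and separates points of $S$. For $R\subseteq S\times S$, $\Sigma(R)$ is the family of $R$-closed sets in $\Sigma$ ($A$ is $R$-closed if $x\in A$, $xRs$ imply $s\in A$). $\mathcal{R}(\Gamma)=\{(s,t):\forall A\in\Gamma\,(s\in A\iff t\in A)\}$; $\mathcal{R}^T(\Lambda)=\{(s,t):\forall a\,\forall E\in\Lambda\ \tau_a(s,E)=\tau_a(t,E)\}$; $\mathcal{O}(R)=\mathcal{R}^T(\Sigma(R))$, with iterates $\mathcal{O}^0(R)=R$, $\mathcal{O}^{\alpha+1}(R)=\mathcal{O}(\mathcal{O}^\alpha(R))$, $\mathcal{O}^\lambda(R)=\bigcap_{\alpha<\lambda}\mathcal{O}^\alpha(R)$ for limit $\lambda$. Event bisimilarity ${\sim_e}=\mathcal{R}(\sigma(\llbracket\mathcal{L}\rrbracket))$, where $\sigma(\llbracket\mathcal{L}\rrbracket)$ is the $\sigma$-algebra generated by the denotations of formulas $\phi::=\top\mid\phi\wedge\psi\mid\langle a\rangle_{>q}\phi$ ($q\in\mathbb{Q}\cap[0,1]$),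 $\llbracket\langle a\rangle_{>q}\phi\rrbracket=\{s:\tau_a(s,\llbracket\phi\rrbracket)>q\}$. A state bisimulation is a symmetric $R$ with $sRt$, $C\in\Sigma(R)$ implying $\tau_a(s,C)=\tau_a(t,C)$ for all $a$; state bisimilarity $\sim_s$ is the union of all state bisimulations. The Zhou ordinal $\mathfrak{Z}(\mathbb{S})$ is the least $\alpha$ with $\mathcal{O}^\alpha(\sim_e)={\sim_s}$ (it exists). $\mathfrak{Z}(\mathcal{S})$ is the supremum of $\mathfrak{Z}(\mathbb{S})$ over all separable LMPs $\mathbb{S}$. *)

theory Defs
  imports "HOL-Probability.Probability"
begin

text \<open>The value tau_a(s,E) is measure (tau a s) E.\<close>

definition LMP :: "'s measure \<Rightarrow> ('l::countable \<Rightarrow> 's \<Rightarrow> 's measure) \<Rightarrow> bool" where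
  "LMP M tau \<longleftrightarrow> (\<forall>a. tau a \<in> M \<rightarrow>\<^sub>M subprob_algebra M)"

definition separable_LMP :: "'s measure \<Rightarrow> ('l::countable \<Rightarrow> 's \<Rightarrow> 's measure) \<Rightarrow> bool" where
  "separable_LMP M tau \<longleftrightarrow> LMP M tau
     \<and> (\<exists>G. countable G \<and> G \<subseteq> Pow (space M) \<and> sets M = sigma_sets (space M) G)
     \<and> (\<forall>x\<in>space M. \<forall>y\<in>space M. x \<noteq> y \<longrightarrow> (\<exists>A\<in>sets M. (x \<in> A) \<noteq> (y \<in> A)))"

definition closed_sets :: "'s measure \<Rightarrow> ('s \<times> 's) set \<Rightarrow> 's set set" where
  "closed_sets M R = {A \<in> sets M. \<forall>x s. x \<in> A \<and> (x, s) \<in> R \<longrightarrow> s \<in> A}"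

definition rel_of_sets :: "'s measure \<Rightarrow> 's set set \<Rightarrow> ('s \<times> 's) set" where
  "rel_of_sets M \<Gamma> = {(s, t). s \<in> space M \<and> t \<in> space M \<and> (\<forall>A\<in>\<Gamma>. s \<in> A \<longleftrightarrow> t \<in> A)}"

definition rel_T :: "'s measure \<Rightarrow> ('l \<Rightarrow> 's \<Rightarrow> 's measure) \<Rightarrow> 's set set \<Rightarrow> ('s \<times> 's) set" where
  "rel_T M tau \<Lambda> = {(s, t). s \<in> space M \<and> t \<in> space M \<and>
      (\<forall>a. \<forall>E\<in>\<Lambda>. measure (tau a s) E = measure (tau a t) E)}"

definition Oop :: "'s measure \<Rightarrow> ('l \<Rightarrow> 's \<Rightarrow> 's measure) \<Rightarrow> ('s \<times> 's) set \<Rightarrow> ('s \<times> 's) set" where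
  "Oop M tau R = rel_T M tau (closed_sets M R)"

text \<open>Ordinals are represented by well-orders w. For a set P of indices (an initial segment
  of w) and a family G of already computed iterates (G i = O^(beta_i)(R) where beta_i is
  the order type of the strict initial segment below i), the iterate at the order type of P is:
  R if P is empty; O(G m) if P has a w-maximum m (successor case);
  the intersection of all G i, i in P, otherwise (limit case).\<close>

definition zstage :: "'s measure \<Rightarrow> ('l \<Rightarrow> 's \<Rightarrow> 's measure) \<Rightarrow> ('s \<times> 's) set \<Rightarrow> 'i rel
    \<Rightarrow> ('i \<Rightarrow> ('s \<times> 's) set) \<Rightarrow> 'i set \<Rightarrow> ('s \<times> 's) set" where
  "zstage M tau R w G P =
     (if P = {} then R
      else if (\<exists>m\<in>P. \<forall>i\<in>P. (i, m) \<in> w)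
        then Oop M tau (G (SOME m. m \<in> P \<and> (\<forall>i\<in>P. (i, m) \<in> w)))
      else \<Inter> (G ` P))"

text \<open>F is the sequence of iterates along w: F i = O^(otype of underS w i)(R).\<close>
definition zhou_iter :: "'s measure \<Rightarrow> ('l \<Rightarrow> 's \<Rightarrow> 's measure) \<Rightarrow> ('s \<times> 's) set \<Rightarrow> 'i rel
    \<Rightarrow> ('i \<Rightarrow> ('s \<times> 's) set) \<Rightarrow> bool" where
  "zhou_iter M tau R w F \<longleftrightarrow> (\<forall>i\<in>Field w. F i = zstage M tau R w F (underS w i))"

definition Opow :: "'s measure \<Rightarrow> ('l \<Rightarrow> 's \<Rightarrow> 's measure) \<Rightarrow> 'i rel \<Rightarrow> ('s \<times> 's) set
    \<Rightarrow> ('s \<times> 's) set" where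
  "Opow M tau w R = (THE X. \<exists>F. zhou_iter M tau R w F \<and> X = zstage M tau R w F (Field w))"

datatype 'l lform = LTop | LAnd "'l lform" "'l lform" | LDiam 'l rat "'l lform"

fun wf_lform :: "'l lform \<Rightarrow> bool" where
  "wf_lform LTop = True"
| "wf_lform (LAnd p q) = (wf_lform p \<and> wf_lform q)"
| "wf_lform (LDiam a q p) = (0 \<le> q \<and> q \<le> 1 \<and> wf_lform p)"

fun sem :: "'s measure \<Rightarrow> ('l \<Rightarrow> 's \<Rightarrow> 's measure) \<Rightarrow> 'l lform \<Rightarrow> 's set" where
  "sem M tau LTop = space M"
| "sem M tau (LAnd p q) = sem M tau p \<inter> sem M tau q"
| "sem M tau (LDiam a q p) = {s \<in> space M. measure (tau a s) (sem M tau p) > real_of_rat q}"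

definition event_bisim :: "'s measure \<Rightarrow> ('l \<Rightarrow> 's \<Rightarrow> 's measure) \<Rightarrow> ('s \<times> 's) set" where
  "event_bisim M tau =
     rel_of_sets M (sigma_sets (space M) {sem M tau \<phi> | \<phi>. wf_lform \<phi>})"

definition state_bisimulation :: "'s measure \<Rightarrow> ('l \<Rightarrow> 's \<Rightarrow> 's measure) \<Rightarrow> ('s \<times> 's) set \<Rightarrow> bool" where
  "state_bisimulation M tau R \<longleftrightarrow> R \<subseteq> space M \<times> space M \<and> sym R \<and>
     (\<forall>s t C a. (s, t) \<in> R \<and> C \<in> closed_sets M R \<longrightarrow> measure (tau a s) C = measure (tau a t) C)"

definition state_bisim :: "'s measure \<Rightarrow> ('l \<Rightarrow> 's \<Rightarrow> 's measure) \<Rightarrow> ('s \<times> 's) set" where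
  "state_bisim M tau = \<Union> {R. state_bisimulation M tau R}"

definition continuum_succ :: "(nat \<Rightarrow> bool) set rel" where
  "continuum_succ = cardSuc (card_of (UNIV :: (nat \<Rightarrow> bool) set))"

end

theory Submission
  imports Defs
begin

lemma wo_facts:
  assumes "Well_order w"
  shows "antisym w" "trans w" "total_on (Field w) w" "refl_on (Field w) w"
  using assms by (auto simp: well_order_on_def linear_order_on_def partial_order_on_def preorder_on_def)

lemma zstage_max:
  assumes W: "Well_order w" and m: "m \<in> P" "\<forall>i\<in>P. (i,m)\<in>w"
  shows "zstage M tau R w G P = Oop M tau (G m)"
proof -
  let ?m = "SOME m. m \<in> P \<and> (\<forall>i\<in>P. (i, m) \<in> w)"
  have ex: "\<exists>m. m \<in> P \<and> (\<forall>i\<in>P. (i, m) \<in> w)" using m by blast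
  have "?m \<in> P \<and> (\<forall>i\<in>P. (i, ?m) \<in> w)" using someI_ex[OF ex] .
  hence "?m = m" using m wo_facts(1)[OF W] by (auto dest: antisymD)
  thus ?thesis using m unfolding zstage_def by auto
qed

lemma zstage_lim:
  assumes "P \<noteq> {}" "\<not> (\<exists>m\<in>P. \<forall>i\<in>P. (i,m)\<in>w)"
  shows "zstage M tau R w G P = \<Inter> (G ` P)"
  using assms unfolding zstage_def by auto

lemma zstage_empty: "zstage M tau R w G {} = R"
  unfolding zstage_def by auto

lemma wo_ind[consumes 2, case_names step]:
  assumes W: "Well_order w" and xF: "x \<in> Field w"
    and IND: "\<And>x. x \<in> Field w \<Longrightarrow> (\<And>y. y \<in> underS w x \<Longrightarrow> Q y) \<Longrightarrow> Q x"
  shows "Q x"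
proof -
  have "x \<in> Field w \<longrightarrow> Q x"
  proof (rule wo_rel.well_order_induct[of w])
    show "wo_rel w" using W by (simp add: wo_rel_def)
  next
    fix x assume H: "\<forall>y. y \<noteq> x \<and> (y, x) \<in> w \<longrightarrow> y \<in> Field w \<longrightarrow> Q y"
    show "x \<in> Field w \<longrightarrow> Q x"
    proof
      assume "x \<in> Field w"
      moreover have "\<And>y. y \<in> underS w x \<Longrightarrow> Q y"
        using H by (auto simp: underS_def Field_def)
      ultimately show "Q x" by (rule IND)
    qed
  qed
  thus "Q x" using xF by blast
qed

lemma zcases:
  assumes W: "Well_order w"
  obtains (empty) "P = {}" "zstage M tau R w G P = R"
   | (succ) m where "m \<in> P" "\<forall>j\<in>P. (j,m)\<in>w" "zstage M tau R w G P = Oop M tau (G m)"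
   | (lim) "P \<noteq> {}" "\<not>(\<exists>m\<in>P. \<forall>j\<in>P. (j,m)\<in>w)" "zstage M tau R w G P = \<Inter>(G ` P)"
proof -
  consider "P = {}" | "\<exists>m\<in>P. \<forall>j\<in>P. (j,m)\<in>w" | "P \<noteq> {}" "\<not>(\<exists>m\<in>P. \<forall>j\<in>P. (j,m)\<in>w)" by blast
  thus ?thesis
  proof cases
    case 1 thus ?thesis using empty zstage_empty by metis
  next
    case 2
    then obtain m where m: "m \<in> P" "\<forall>j\<in>P. (j,m)\<in>w" by blast
    show ?thesis by (rule succ[OF m zstage_max[OF W m]])
  next
    case 3 thus ?thesis using lim zstage_lim by metis
  qed
qed

lemma Oop_mono: "X \<subseteq> Y \<Longrightarrow> Oop M tau X \<subseteq> Oop M tau Y"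
  unfolding Oop_def rel_T_def closed_sets_def by blast

lemma zi_eq: "zhou_iter M tau R w F \<Longrightarrow> i \<in> Field w \<Longrightarrow> F i = zstage M tau R w F (underS w i)"
  unfolding zhou_iter_def by blast

lemma underS_in: "j \<in> underS w i \<Longrightarrow> j \<in> Field w"
  unfolding underS_def Field_def by auto

lemma L1:
  assumes W: "Well_order w" and Z: "zhou_iter M tau R w F" and base: "Oop M tau R \<subseteq> R"
    and kF: "k \<in> Field w"
  shows "Oop M tau (F k) \<subseteq> F k"
  using W kF
proof (induction k rule: wo_ind)
  case (step k)
  note e = zi_eq[OF Z step(1)]
  show ?case
  proof (cases rule: zcases[OF W, of "underS w k" M tau R F, case_names empty succ lim])
    case empty thus ?thesis using e base by simp
  next
    case (succ m)
    have "Oop M tau (F m) \<subseteq> F m" using step(2)[OF succ(1)] .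
    thus ?thesis using e succ Oop_mono by metis
  next
    case lim
    have "\<And>j. j \<in> underS w k \<Longrightarrow> Oop M tau (F k) \<subseteq> F j"
    proof -
      fix j assume j: "j \<in> underS w k"
      have "F k \<subseteq> F j" using e lim j by auto
      hence "Oop M tau (F k) \<subseteq> Oop M tau (F j)" by (rule Oop_mono)
      thus "Oop M tau (F k) \<subseteq> F j" using step(2)[OF j] by blast
    qed
    thus ?thesis using e lim by auto
  qed
qed

lemma L2:
  assumes W: "Well_order w" and Z: "zhou_iter M tau R w F" and base: "Oop M tau R \<subseteq> R"
    and iF: "i' \<in> Field w"
  shows "\<forall>i. i \<in> underS w i' \<longrightarrow> F i' \<subseteq> Oop M tau (F i)"
  using W iF
proof (induction i' rule: wo_ind)
  case (step i')
  note e = zi_eq[OF Z step(1)]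
  show ?case
  proof (intro allI impI)
    fix i assume i: "i \<in> underS w i'"
    show "F i' \<subseteq> Oop M tau (F i)"
    proof (cases rule: zcases[OF W, of "underS w i'" M tau R F, case_names empty succ lim])
      case empty thus ?thesis using i by simp
    next
      case (succ m)
      show ?thesis
      proof (cases "i = m")
        case True thus ?thesis using e succ by simp
      next
        case False
        hence "i \<in> underS w m" using succ i by (auto simp: underS_def)
        hence "F m \<subseteq> Oop M tau (F i)" using step(2)[OF succ(1)] by blast
        moreover have "Oop M tau (F m) \<subseteq> F m" using L1[OF W Z base underS_in[OF succ(1)]] .
        ultimately show ?thesis using e succ by simp
      qed
    next
      case lim
      then obtain k where k: "k \<in> underS w i'" "(k,i) \<notin> w" using i by blast
      have kF: "k \<in> Field w" "i \<in> Field w" using underS_in[OF k(1)] underS_in[OF i] .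
      have "(i,i) \<in> w" using kF wo_facts(4)[OF W] by (auto simp: refl_on_def)
      hence ne: "i \<noteq> k" using k by blast
      hence "(i,k) \<in> w" using k kF wo_facts(3)[OF W] unfolding total_on_def by blast
      note this ne
      hence "i \<in> underS w k" by (auto simp: underS_def)
      hence "F k \<subseteq> Oop M tau (F i)" using step(2)[OF k(1)] by blast
      moreover have "F i' \<subseteq> F k" using e lim k(1) by auto
      ultimately show ?thesis by blast
    qed
  qed
qed

lemma L2':
  assumes W: "Well_order w" and Z: "zhou_iter M tau R w F" and base: "Oop M tau R \<subseteq> R"
    and "i \<in> underS w i'"
  shows "F i' \<subseteq> F i"
proof -
  have "i' \<in> Field w" using assms(4) by (auto simp: underS_def Field_def)
  thus ?thesis using L2[OF W Z base] L1[OF W Z base underS_in[OF assms(4)]] assms(4) by blast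
qed

lemma Oop_space: "Oop M tau X \<subseteq> space M \<times> space M"
  unfolding Oop_def rel_T_def by auto

lemma Lspace:
  assumes W: "Well_order w" and Z: "zhou_iter M tau R w F" and RS: "R \<subseteq> space M \<times> space M"
    and kF: "k \<in> Field w"
  shows "F k \<subseteq> space M \<times> space M"
  using W kF
proof (induction k rule: wo_ind)
  case (step k)
  note e = zi_eq[OF Z step(1)]
  show ?case
  proof (cases rule: zcases[OF W, of "underS w k" M tau R F, case_names empty succ lim])
    case empty thus ?thesis using e RS by simp
  next
    case (succ m) thus ?thesis using e Oop_space by metis
  next
    case lim
    then obtain j where j: "j \<in> underS w k" by blast
    thus ?thesis using e lim step(2)[OF j] by auto
  qed
qed

lemma L3:
  assumes W: "Well_order w" and Z: "zhou_iter M tau R w F" and base: "Oop M tau R \<subseteq> R"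
    and RS: "R \<subseteq> space M \<times> space M"
    and big: "\<And>f. inj_on f (Field w) \<Longrightarrow> f ` Field w \<subseteq> space M \<times> space M \<Longrightarrow> False"
  shows "\<exists>i\<in>Field w. Oop M tau (F i) = F i"
proof (rule ccontr)
  assume "\<not> ?thesis"
  hence ne: "\<forall>i\<in>Field w. \<exists>p. p \<in> F i - Oop M tau (F i)" using L1[OF W Z base] by blast
  define p where "p i = (SOME p. p \<in> F i - Oop M tau (F i))" for i
  have p: "p i \<in> F i - Oop M tau (F i)" if "i \<in> Field w" for i
    unfolding p_def using ne that by (metis someI_ex)
  have key: "p i \<noteq> p i'" if "i \<in> Field w" "i' \<in> Field w" "(i,i') \<in> w" "i \<noteq> i'" for i i'
  proof -
    have "i \<in> underS w i'" using that by (auto simp: underS_def)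
    hence "F i' \<subseteq> Oop M tau (F i)" using L2[OF W Z base that(2)] by blast
    thus ?thesis using p[OF that(1)] p[OF that(2)] by (metis DiffD1 DiffD2 subsetD)
  qed
  have "inj_on p (Field w)"
  proof (rule inj_onI)
    fix i i' assume a: "i \<in> Field w" "i' \<in> Field w" "p i = p i'"
    show "i = i'"
    proof (rule ccontr)
      assume "i \<noteq> i'"
      hence "(i,i') \<in> w \<or> (i',i) \<in> w" using a wo_facts(3)[OF W] unfolding total_on_def by blast
      thus False using key a \<open>i \<noteq> i'\<close> by metis
    qed
  qed
  moreover have "p ` Field w \<subseteq> space M \<times> space M"
    using p Lspace[OF W Z RS] by blast
  ultimately show False by (rule big)
qed

lemma L4:
  assumes W: "Well_order w" and Z: "zhou_iter M tau R w F" and base: "Oop M tau R \<subseteq> R"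
    and iF: "i \<in> Field w" and fx: "Oop M tau (F i) = F i" and jF: "j \<in> Field w"
  shows "F i \<subseteq> F j"
  using W jF
proof (induction j rule: wo_ind)
  case (step j)
  note e = zi_eq[OF Z step(1)]
  show ?case
  proof (cases "(j,i) \<in> w")
    case True
    show ?thesis
    proof (cases "j = i")
      case False
      hence "j \<in> underS w i" using True by (auto simp: underS_def)
      thus ?thesis using L2'[OF W Z base] by blast
    qed simp
  next
    case False
    have "i \<noteq> j" using False iF wo_facts(4)[OF W] by (auto simp: refl_on_def)
    hence "(i,j) \<in> w" using False iF step(1) wo_facts(3)[OF W] unfolding total_on_def by blast
    hence ij: "i \<in> underS w j" using \<open>i \<noteq> j\<close> by (auto simp: underS_def)
    show ?thesis
    proof (cases rule: zcases[OF W, of "underS w j" M tau R F, case_names empty succ lim])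
      case empty thus ?thesis using ij by simp
    next
      case (succ m)
      have "F i \<subseteq> F m" using step(2)[OF succ(1)] .
      hence "Oop M tau (F i) \<subseteq> Oop M tau (F m)" by (rule Oop_mono)
      thus ?thesis using e succ fx by simp
    next
      case lim
      have "F i \<subseteq> \<Inter> (F ` underS w j)" using step(2) by (simp add: INT_greatest)
      thus ?thesis using e lim by simp
    qed
  qed
qed

lemma L5:
  assumes W: "Well_order w" and Z: "zhou_iter M tau R w F" and base: "Oop M tau R \<subseteq> R"
    and iF: "i \<in> Field w" and fx: "Oop M tau (F i) = F i"
  shows "zstage M tau R w F (Field w) = F i"
proof (cases rule: zcases[OF W, of "Field w" M tau R F, case_names empty succ lim])
  case empty thus ?thesis using iF by simp
next
  case (succ m)
  have "F i \<subseteq> F m" using L4[OF W Z base iF fx succ(1)] .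
  moreover have "F m \<subseteq> F i"
  proof (cases "m = i")
    case False
    hence "i \<in> underS w m" using succ iF by (auto simp: underS_def)
    thus ?thesis using L2[OF W Z base succ(1)] fx by blast
  qed simp
  ultimately show ?thesis using succ fx by simp
next
  case lim thus ?thesis using L4[OF W Z base iF fx] iF by auto
qed

lemma LR0:
  assumes W: "Well_order w" and Z: "zhou_iter M tau R w F" and R0R: "R0 \<subseteq> R"
    and stepO: "\<And>X. R0 \<subseteq> X \<Longrightarrow> R0 \<subseteq> Oop M tau X"
    and kF: "k \<in> Field w"
  shows "R0 \<subseteq> F k"
  using W kF
proof (induction k rule: wo_ind)
  case (step k)
  note e = zi_eq[OF Z step(1)]
  show ?case
  proof (cases rule: zcases[OF W, of "underS w k" M tau R F, case_names empty succ lim])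
    case empty thus ?thesis using e R0R by simp
  next
    case (succ m) thus ?thesis using e stepO step(2)[OF succ(1)] by metis
  next
    case lim
    have "R0 \<subseteq> \<Inter> (F ` underS w k)" using step(2) by (simp add: INT_greatest)
    thus ?thesis using e lim by simp
  qed
qed

lemma zstage_cong:
  assumes "\<forall>y\<in>P. f y = g y"
  shows "zstage M tau R w f P = zstage M tau R w g P"
proof (cases "\<exists>m\<in>P. \<forall>i\<in>P. (i, m) \<in> w")
  case True
  let ?m = "SOME m. m \<in> P \<and> (\<forall>i\<in>P. (i, m) \<in> w)"
  have "?m \<in> P" using someI_ex[of "\<lambda>m. m \<in> P \<and> (\<forall>i\<in>P. (i, m) \<in> w)"] True by blast
  hence "f ?m = g ?m" using assms by blast
  thus ?thesis using True unfolding zstage_def by auto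
next
  case False
  have "f ` P = g ` P" using assms by auto
  thus ?thesis using False unfolding zstage_def by auto
qed

lemma zhou_exists:
  assumes W: "Well_order w"
  shows "\<exists>F. zhou_iter M tau R w F"
proof -
  interpret wo_rel w using W by (simp add: wo_rel_def)
  define H where "H f i = zstage M tau R w f (Order_Relation.underS w i)" for f i
  have "adm_wo H" unfolding adm_wo_def H_def using zstage_cong by blast
  hence "worec H = H (worec H)" by (rule worec_fixpoint)
  hence "zhou_iter M tau R w (worec H)" unfolding zhou_iter_def
    by (metis H_def)
  thus ?thesis by blast
qed

section \<open>Measure-theoretic part\<close>

lemma sem_sets:
  assumes L: "LMP M tau"
  shows "sem M tau \<phi> \<in> sets M"
proof (induction \<phi>)
  case (LDiam a q p)
  have ta: "tau a \<in> M \<rightarrow>\<^sub>M subprob_algebra M" using L unfolding LMP_def by blast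
  have "(\<lambda>s. measure (tau a s) (sem M tau p)) \<in> borel_measurable M"
    using measurable_compose[OF ta measurable_measure_subprob_algebra[OF LDiam]] by simp
  hence "{s \<in> space M. real_of_rat q < measure (tau a s) (sem M tau p)} \<in> sets M" by measurable
  thus ?case by simp
qed auto

lemma M1:
  assumes L: "LMP M tau" and SB: "state_bisimulation M tau R0"
  shows "R0 \<subseteq> event_bisim M tau"
proof -
  have sub: "R0 \<subseteq> space M \<times> space M" and sy: "sym R0"
    and eq: "\<And>s t C a. (s,t) \<in> R0 \<Longrightarrow> C \<in> closed_sets M R0 \<Longrightarrow> measure (tau a s) C = measure (tau a t) C"
    using SB unfolding state_bisimulation_def by blast+
  have cl: "\<And>x y. x \<in> sem M tau \<phi> \<Longrightarrow> (x,y) \<in> R0 \<Longrightarrow> y \<in> sem M tau \<phi>" for \<phi>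
  proof (induction \<phi>)
    case LTop thus ?case using sub by auto
  next
    case (LAnd p1 p2) thus ?case by auto
  next
    case (LDiam a q p)
    have "sem M tau p \<in> closed_sets M R0"
      using sem_sets[OF L] LDiam.IH unfolding closed_sets_def by blast
    hence "measure (tau a x) (sem M tau p) = measure (tau a y) (sem M tau p)"
      using eq LDiam.prems(2) by blast
    thus ?case using LDiam.prems sub by auto
  qed
  have sg: "A \<in> sigma_sets (space M) {sem M tau \<phi> | \<phi>. wf_lform \<phi>} \<Longrightarrow>
      \<forall>x y. (x,y) \<in> R0 \<longrightarrow> x \<in> A \<longrightarrow> y \<in> A" for A
  proof (induction rule: sigma_sets.induct)
    case (Basic a) thus ?case using cl by blast
  next
    case Empty thus ?case by simp
  next
    case (Compl a)
    show ?case
    proof (intro allI impI)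
      fix x y assume xy: "(x,y) \<in> R0" "x \<in> space M - a"
      have "(y,x) \<in> R0" using xy sy by (auto dest: symD)
      thus "y \<in> space M - a" using Compl.IH xy sub by blast
    qed
  next
    case (Union a) thus ?case by blast
  qed
  show ?thesis
  proof
    fix p assume p: "p \<in> R0"
    obtain x y where xy: "p = (x,y)" by force
    have yx: "(y,x) \<in> R0" using p xy sy by (auto dest: symD)
    show "p \<in> event_bisim M tau"
      unfolding event_bisim_def rel_of_sets_def using sg p yx sub xy by blast
  qed
qed

lemma M2:
  assumes L: "LMP M tau"
  shows "Oop M tau (event_bisim M tau) \<subseteq> event_bisim M tau"
proof
  fix p assume p: "p \<in> Oop M tau (event_bisim M tau)"
  obtain s t where st: "p = (s,t)" by force
  have sp: "s \<in> space M" "t \<in> space M"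
    and eq: "\<And>a E. E \<in> closed_sets M (event_bisim M tau) \<Longrightarrow> measure (tau a s) E = measure (tau a t) E"
    using p st unfolding Oop_def rel_T_def by auto
  let ?S = "sigma_sets (space M) {sem M tau \<phi> | \<phi>. wf_lform \<phi>}"
  have c1: "sem M tau \<phi> \<in> closed_sets M (event_bisim M tau)" if "wf_lform \<phi>" for \<phi>
  proof -
    have "sem M tau \<phi> \<in> ?S" using that by blast
    thus ?thesis using sem_sets[OF L] unfolding closed_sets_def event_bisim_def rel_of_sets_def
      by blast
  qed
  have c2: "wf_lform \<phi> \<Longrightarrow> (s \<in> sem M tau \<phi> \<longleftrightarrow> t \<in> sem M tau \<phi>)" for \<phi>
  proof (induction \<phi>)
    case (LDiam a q p)
    have "measure (tau a s) (sem M tau p) = measure (tau a t) (sem M tau p)"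
      using eq c1 LDiam.prems by simp
    thus ?case using sp by simp
  qed (use sp in auto)
  have c3: "A \<in> ?S \<Longrightarrow> (s \<in> A \<longleftrightarrow> t \<in> A)" for A
  proof (induction rule: sigma_sets.induct)
    case (Basic a) thus ?case using c2 by blast
  next
    case (Compl a) thus ?case using sp by blast
  qed auto
  show "p \<in> event_bisim M tau"
    unfolding event_bisim_def rel_of_sets_def using c3 sp st by blast
qed

lemma M4:
  assumes SB: "state_bisimulation M tau R0" and sub: "R0 \<subseteq> X"
  shows "R0 \<subseteq> Oop M tau X"
proof
  fix p assume p: "p \<in> R0"
  have cs: "closed_sets M X \<subseteq> closed_sets M R0" using sub unfolding closed_sets_def by blast
  show "p \<in> Oop M tau X"
    using SB p cs unfolding state_bisimulation_def Oop_def rel_T_def by blast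
qed

lemma M6:
  assumes fx: "Oop M tau X = X"
  shows "state_bisimulation M tau X"
proof -
  have "X \<subseteq> space M \<times> space M" using Oop_space[of M tau X] fx by simp
  moreover have "sym X"
  proof (rule symI)
    fix s t assume "(s,t) \<in> X"
    hence "(s,t) \<in> Oop M tau X" using fx by simp
    hence "(t,s) \<in> Oop M tau X" unfolding Oop_def rel_T_def by auto
    thus "(t,s) \<in> X" using fx by simp
  qed
  moreover have "\<forall>s t C a. (s, t) \<in> X \<and> C \<in> closed_sets M X \<longrightarrow> measure (tau a s) C = measure (tau a t) C"
  proof (intro allI impI)
    fix s t C a assume h: "(s, t) \<in> X \<and> C \<in> closed_sets M X"
    hence "(s,t) \<in> Oop M tau X" using fx by simp
    thus "measure (tau a s) C = measure (tau a t) C" using h unfolding Oop_def rel_T_def by auto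
  qed
  ultimately show ?thesis unfolding state_bisimulation_def by blast
qed

section \<open>Cardinality\<close>

definition il :: "(nat \<Rightarrow> bool) \<Rightarrow> (nat \<Rightarrow> bool) \<Rightarrow> nat \<Rightarrow> bool" where
  "il f g = (\<lambda>n. if even n then f (n div 2) else g (n div 2))"

lemma il_inj: "il f g = il f' g' \<Longrightarrow> f = f' \<and> g = g'"
proof -
  assume h: "il f g = il f' g'"
  have "f n = f' n" for n using fun_cong[OF h, of "2*n"] by (simp add: il_def)
  moreover have "g n = g' n" for n using fun_cong[OF h, of "2*n+1"] by (simp add: il_def)
  ultimately show ?thesis by (simp add: fun_eq_iff)
qed

lemma sep_inj:
  fixes M :: "'s measure" and tau :: "'l::countable \<Rightarrow> 's \<Rightarrow> 's measure"
  assumes S: "separable_LMP M tau"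
  shows "\<exists>g :: 's \<Rightarrow> nat \<Rightarrow> bool. inj_on g (space M)"
proof -
  have "\<exists>G. countable G \<and> G \<subseteq> Pow (space M) \<and> sets M = sigma_sets (space M) G"
    using S unfolding separable_LMP_def by (elim conjE)
  then obtain G where G: "countable G" "G \<subseteq> Pow (space M)" "sets M = sigma_sets (space M) G"
    by (elim exE conjE)
  have sep: "\<forall>x\<in>space M. \<forall>y\<in>space M. x \<noteq> y \<longrightarrow> (\<exists>A\<in>sets M. (x \<in> A) \<noteq> (y \<in> A))"
    using S unfolding separable_LMP_def by (elim conjE)
  define g where "g x = (\<lambda>n. x \<in> from_nat_into G n)" for x
  have "inj_on g (space M)"
  proof (rule inj_onI, rule ccontr)
    fix x y assume xy: "x \<in> space M" "y \<in> space M" "g x = g y" "x \<noteq> y"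
    have nosep: "\<forall>B\<in>G. (x \<in> B) = (y \<in> B)"
    proof
      fix B assume B: "B \<in> G"
      have "from_nat_into G (to_nat_on G B) = B" using G(1) B by simp
      thus "(x \<in> B) = (y \<in> B)" using fun_cong[OF xy(3), of "to_nat_on G B"] unfolding g_def by simp
    qed
    have ind: "A \<in> sigma_sets (space M) G \<Longrightarrow> (x \<in> A) = (y \<in> A)" for A
    proof (induction rule: sigma_sets.induct)
      case (Basic a) thus ?case using nosep by blast
    next
      case (Compl a) thus ?case using xy by blast
    next
      case (Union a) thus ?case by blast
    qed simp
    obtain A where A: "A \<in> sets M" "(x \<in> A) \<noteq> (y \<in> A)" using sep xy by blast
    have "A \<in> sigma_sets (space M) G" using A(1) G(3) by simp
    thus False using ind A(2) by blast
  qed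
  thus ?thesis by (rule exI[of _ g])
qed

lemma big_lemma:
  fixes M :: "'s measure" and tau :: "'l::countable \<Rightarrow> 's \<Rightarrow> 's measure"
  assumes S: "separable_LMP M tau"
    and inj: "inj_on f (Field continuum_succ)" and img: "f ` Field continuum_succ \<subseteq> space M \<times> space M"
  shows False
proof -
  obtain g :: "'s \<Rightarrow> nat \<Rightarrow> bool" where g: "inj_on g (space M)" using sep_inj[OF S] by blast
  define h where "h i = il (g (fst (f i))) (g (snd (f i)))" for i
  have "inj_on h (Field continuum_succ)"
  proof (rule inj_onI)
    fix i j assume a: "i \<in> Field continuum_succ" "j \<in> Field continuum_succ" "h i = h j"
    have "g (fst (f i)) = g (fst (f j)) \<and> g (snd (f i)) = g (snd (f j))"
      using il_inj a(3) unfolding h_def by blast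
    moreover have "f i \<in> space M \<times> space M" "f j \<in> space M \<times> space M" using a img by auto
    ultimately have "fst (f i) = fst (f j)" "snd (f i) = snd (f j)"
      using g inj_onD[OF g] by (auto simp: mem_Times_iff)
    hence "f i = f j" by (simp add: prod_eq_iff)
    thus "i = j" using inj_onD[OF inj _ a(1,2)] by simp
  qed
  hence "\<exists>h. inj_on h (Field continuum_succ) \<and> h ` Field continuum_succ \<subseteq> (UNIV :: (nat \<Rightarrow> bool) set)"
    by (intro exI[of _ h]) simp
  hence le: "(card_of (Field continuum_succ), card_of (UNIV :: (nat \<Rightarrow> bool) set)) \<in> ordLeq"
    by (simp only: card_of_ordLeq)
  have CO: "Card_order continuum_succ" unfolding continuum_succ_def
    by (rule cardSuc_Card_order[OF card_of_Card_order])
  have "(continuum_succ, card_of (UNIV :: (nat \<Rightarrow> bool) set)) \<in> ordLeq"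
    using ordIso_ordLeq_trans[OF ordIso_symmetric[OF card_of_Field_ordIso[OF CO]] le] .
  moreover have "(card_of (UNIV :: (nat \<Rightarrow> bool) set), continuum_succ) \<in> ordLess"
    unfolding continuum_succ_def by (rule cardSuc_greater[OF card_of_Card_order])
  ultimately show False using not_ordLess_ordLeq by blast
qed

lemma key:
  assumes S: "separable_LMP M tau" and Z: "zhou_iter M tau (event_bisim M tau) continuum_succ F"
  shows "zstage M tau (event_bisim M tau) continuum_succ F (Field continuum_succ) = state_bisim M tau"
proof -
  have L: "LMP M tau" using S unfolding separable_LMP_def by (elim conjE)
  have CO: "Card_order continuum_succ" unfolding continuum_succ_def
    by (rule cardSuc_Card_order[OF card_of_Card_order])
  have W: "Well_order continuum_succ" by (rule card_order_on_well_order_on[OF CO])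
  have base: "Oop M tau (event_bisim M tau) \<subseteq> event_bisim M tau" using M2[OF L] .
  have RS: "event_bisim M tau \<subseteq> space M \<times> space M"
    unfolding event_bisim_def rel_of_sets_def by (rule subsetI) (simp add: case_prod_beta mem_Times_iff)
  have ex: "\<exists>i\<in>Field continuum_succ. Oop M tau (F i) = F i"
    by (rule L3[OF W Z base RS big_lemma[OF S]])
  then obtain i where iF: "i \<in> Field continuum_succ" and fx: "Oop M tau (F i) = F i"
    by (elim bexE)
  have e: "zstage M tau (event_bisim M tau) continuum_succ F (Field continuum_succ) = F i"
    using L5[OF W Z base iF fx] .
  have "F i \<in> {R. state_bisimulation M tau R}" using M6[OF fx] by simp
  hence s1: "F i \<subseteq> state_bisim M tau"
    unfolding state_bisim_def by (rule Union_upper)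
  have s2: "state_bisim M tau \<subseteq> F i"
    unfolding state_bisim_def
  proof (rule Union_least)
    fix R0 assume "R0 \<in> {R. state_bisimulation M tau R}"
    hence R0: "state_bisimulation M tau R0" by simp
    show "R0 \<subseteq> F i" using LR0[OF W Z M1[OF L R0] M4[OF R0] iF] .
  qed
  show ?thesis unfolding e using s1 s2 by (rule equalityI)
qed

theorem lemma4p5:
  fixes M :: "'s measure" and tau :: "'l::countable \<Rightarrow> 's \<Rightarrow> 's measure"
  assumes "separable_LMP M tau"
  shows "\<exists>w :: (nat \<Rightarrow> bool) set rel. Well_order w \<and> (w, continuum_succ) \<in> ordLeq \<and>
           Opow M tau w (event_bisim M tau) = state_bisim M tau"
proof -
  have CO: "Card_order continuum_succ" unfolding continuum_succ_def
    by (rule cardSuc_Card_order[OF card_of_Card_order])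
  have W: "Well_order continuum_succ" by (rule card_order_on_well_order_on[OF CO])
  have le: "(continuum_succ, continuum_succ) \<in> ordLeq" by (rule ordLeq_reflexive[OF W])
  obtain F where F: "zhou_iter M tau (event_bisim M tau) continuum_succ F"
    using zhou_exists[OF W, of M tau "event_bisim M tau"] by (elim exE)
  have k: "zstage M tau (event_bisim M tau) continuum_succ F (Field continuum_succ) = state_bisim M tau"
    by (rule key[OF assms F])
  have ex: "\<exists>F. zhou_iter M tau (event_bisim M tau) continuum_succ F \<and>
        state_bisim M tau = zstage M tau (event_bisim M tau) continuum_succ F (Field continuum_succ)"
    using F k by (intro exI[of _ F] conjI) simp_all
  have uq: "X = state_bisim M tau" if h: "\<exists>F. zhou_iter M tau (event_bisim M tau) continuum_succ F \<and>
        X = zstage M tau (event_bisim M tau) continuum_succ F (Field continuum_succ)" for X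
  proof -
    obtain F' where F': "zhou_iter M tau (event_bisim M tau) continuum_succ F'"
        "X = zstage M tau (event_bisim M tau) continuum_succ F' (Field continuum_succ)"
      using h by (elim exE conjE)
    show ?thesis using F'(2) key[OF assms F'(1)] by simp
  qed
  have op: "Opow M tau continuum_succ (event_bisim M tau) = state_bisim M tau"
    unfolding Opow_def by (rule the_equality, rule ex, rule uq, assumption)
  show ?thesis by (rule exI[of _ continuum_succ], intro conjI W le op)
qed

end
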